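(* Let $n\in\mathbb{N}$ and assume $(Q_{n-1})$: $d_{i,l}+d_{j,k}\le d_{i,k}+d_{j,l}$ for all integers $-1\le i\le j\le k\le l\le n-1$. Then for each $m\in\mathbb{N}$ with $m\le n$, the minimization problem defining $d_{m,n}$ admits an optimal transport plan that is both simple and nested.
   Context: Let $\mathbb{N}=\{0,1,2,\dots\}$. Fix a sequence $(\pi^n)_{n\in\mathbb{N}}$ where each $\pi^n=(\pi^n_i)_{i\in\mathbb{N}}$ is a probability distribution on $\mathbb{N}$ with support contained in $\{0,\dots,n\}$, and $\pi^n\ne\pi^m$ for $m\ne n$. Define reals $d_{m,n}$ for $m,n\in\mathbb{N}\cup\{-1\}$ recursively as follows: $d_{-1,-1}=0$, $d_{-1,j}=d_{j,-1}=1$ for $j\in\mathbb{N}$, and for $m,n\in\mathbb{N}$, $$d_{m,n}=\min_{z\in\mathcal{F}_{m,n}}\sum_{i=0}^m\sum_{j=0}^n z_{i,j}\,d_{i-1,j-1},$$ where $\mathcal{F}_{m,n}$ is the set of transport plans from $\pi^m$ to $\pi^n$, i.e. arrays $z=(z_{i,j})_{0\le i\le m,\,0\le j\le n}$ with $z_{i,j}\ge0$, $\sum_{j=0}^n z_{i,j}=\pi^m_i$ for all $i\le m$, and $\sum_{i=0}^m z_{i,j}=\pi^n_j$ for all $j\le n$. For $m\le n$, a transport plan $z\in\mathcal{F}_{m,n}$ is simple if $z_{i,i}=\min\{\pi^m_i,\pi^n_i\}$ for all $i=0,\dots,m$; it is nested if there are no indices $i<j<k<l$ with $z_{i,k}>0$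 and $z_{j,l}>0$. *)

theory Defs
  imports Complex_Main
begin

definition prob_seq :: "(nat \<Rightarrow> nat \<Rightarrow> real) \<Rightarrow> bool" where
  "prob_seq p \<longleftrightarrow>
     (\<forall>n i. 0 \<le> p n i) \<and> (\<forall>n i. n < i \<longrightarrow> p n i = 0) \<and>
     (\<forall>n. (\<Sum>i\<le>n. p n i) = 1) \<and> (\<forall>m n. m \<noteq> n \<longrightarrow> p m \<noteq> p n)"

definition transport_plans :: "(nat \<Rightarrow> nat \<Rightarrow> real) \<Rightarrow> nat \<Rightarrow> nat \<Rightarrow> (nat \<Rightarrow> nat \<Rightarrow> real) set" where
  "transport_plans p m n = {z. (\<forall>i j. 0 \<le> z i j) \<and> (\<forall>i j. (m < i \<or> n < j) \<longrightarrow> z i j = 0) \<and>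
      (\<forall>i\<le>m. (\<Sum>j\<le>n. z i j) = p m i) \<and> (\<forall>j\<le>n. (\<Sum>i\<le>m. z i j) = p n j)}"

text \<open>dd p a b is d_{a-1,b-1} (shift of indices so that -1 becomes 0).\<close>
function dd :: "(nat \<Rightarrow> nat \<Rightarrow> real) \<Rightarrow> nat \<Rightarrow> nat \<Rightarrow> real" where
  "dd p 0 0 = 0"
| "dd p 0 (Suc j) = 1"
| "dd p (Suc i) 0 = 1"
| "dd p (Suc m) (Suc n) =
     Inf ((\<lambda>z. \<Sum>i\<le>m. \<Sum>j\<le>n. z i j * dd p i j) ` transport_plans p m n)"
  by pat_completeness auto
termination
  by (relation "measure (\<lambda>(p, a, b). a + b)") auto

definition d :: "(nat \<Rightarrow> nat \<Rightarrow> real) \<Rightarrow> int \<Rightarrow> int \<Rightarrow> real" where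
  "d p m n = dd p (nat (m + 1)) (nat (n + 1))"

definition transport_cost :: "(nat \<Rightarrow> nat \<Rightarrow> real) \<Rightarrow> nat \<Rightarrow> nat \<Rightarrow> (nat \<Rightarrow> nat \<Rightarrow> real) \<Rightarrow> real" where
  "transport_cost p m n z = (\<Sum>i\<le>m. \<Sum>j\<le>n. z i j * d p (int i - 1) (int j - 1))"

definition optimal_plan :: "(nat \<Rightarrow> nat \<Rightarrow> real) \<Rightarrow> nat \<Rightarrow> nat \<Rightarrow> (nat \<Rightarrow> nat \<Rightarrow> real) \<Rightarrow> bool" where
  "optimal_plan p m n z \<longleftrightarrow> z \<in> transport_plans p m n \<and>
     (\<forall>z' \<in> transport_plans p m n. transport_cost p m n z \<le> transport_cost p m n z')"

definition simple_plan :: "(nat \<Rightarrow> nat \<Rightarrow> real) \<Rightarrow> nat \<Rightarrow> nat \<Rightarrow> (nat \<Rightarrow> nat \<Rightarrow> real) \<Rightarrow> bool" where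
  "simple_plan p m n z \<longleftrightarrow> (\<forall>i\<le>m. z i i = min (p m i) (p n i))"

definition nested_plan :: "(nat \<Rightarrow> nat \<Rightarrow> real) \<Rightarrow> bool" where
  "nested_plan z \<longleftrightarrow> \<not> (\<exists>i j k l. i < j \<and> j < k \<and> k < l \<and> z i k > 0 \<and> z j l > 0)"

end

theory Submission imports Defs "HOL-Analysis.Analysis" begin

lemma plan_nonneg: "z \<in> transport_plans p m n \<Longrightarrow> 0 \<le> z i j"
  by (simp add: transport_plans_def)
lemma plan_out: "z \<in> transport_plans p m n \<Longrightarrow> m < i \<or> n < j \<Longrightarrow> z i j = 0"
  by (auto simp: transport_plans_def)
lemma plan_row: "z \<in> transport_plans p m n \<Longrightarrow> i \<le> m \<Longrightarrow> (\<Sum>j\<le>n. z i j) = p m i"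
  by (simp add: transport_plans_def)
lemma plan_col: "z \<in> transport_plans p m n \<Longrightarrow> j \<le> n \<Longrightarrow> (\<Sum>i\<le>m. z i j) = p n j"
  by (simp add: transport_plans_def)

lemma ps_nonneg: "prob_seq p \<Longrightarrow> 0 \<le> p n i" by (simp add: prob_seq_def)
lemma ps_out: "prob_seq p \<Longrightarrow> n < i \<Longrightarrow> p n i = 0" by (simp add: prob_seq_def)
lemma ps_sum: "prob_seq p \<Longrightarrow> (\<Sum>i\<le>n. p n i) = 1" by (simp add: prob_seq_def)
lemma ps_le1: assumes "prob_seq p" shows "p n i \<le> 1"
proof (cases "i \<le> n")
  case True
  have "p n i \<le> (\<Sum>i\<le>n. p n i)"
    by (rule member_le_sum) (use True ps_nonneg[OF assms] in auto)
  then show ?thesis using ps_sum[OF assms] by simp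
qed (use ps_out[OF assms] in auto)

lemma plan_le_row: assumes "prob_seq p" "z \<in> transport_plans p m n" shows "z i j \<le> p m i"
proof (cases "i \<le> m \<and> j \<le> n")
  case True
  have "z i j \<le> (\<Sum>j\<le>n. z i j)"
    by (rule member_le_sum) (use True plan_nonneg[OF assms(2)] in auto)
  then show ?thesis using plan_row[OF assms(2)] True by simp
next
  case False
  then have "z i j = 0" using plan_out[OF assms(2)] by auto
  then show ?thesis using ps_nonneg[OF assms(1)] by simp
qed

lemma plan_le_col: assumes "prob_seq p" "z \<in> transport_plans p m n" shows "z i j \<le> p n j"
proof (cases "i \<le> m \<and> j \<le> n")
  case True
  have "z i j \<le> (\<Sum>i\<le>m. z i j)"
    by (rule member_le_sum) (use True plan_nonneg[OF assms(2)] in auto)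
  then show ?thesis using plan_col[OF assms(2)] True by simp
next
  case False
  then have "z i j = 0" using plan_out[OF assms(2)] by auto
  then show ?thesis using ps_nonneg[OF assms(1)] by simp
qed

lemma prod_plan: assumes "prob_seq p"
  shows "(\<lambda>i j. p m i * p n j) \<in> transport_plans p m n"
  using ps_nonneg[OF assms] ps_out[OF assms] ps_sum[OF assms]
  by (auto simp: transport_plans_def sum_distrib_left[symmetric] sum_distrib_right[symmetric])

lemma plan_total: assumes "prob_seq p" "z \<in> transport_plans p m n"
  shows "(\<Sum>i\<le>m. \<Sum>j\<le>n. z i j) = 1"
  using plan_row[OF assms(2)] ps_sum[OF assms(1)] by simp

lemma dd_nonneg: assumes "prob_seq p" shows "0 \<le> dd p a b"
proof (induction "a + b" arbitrary: a b rule: less_induct)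
  case less
  show ?case
  proof (cases a)
    case 0 then show ?thesis by (cases b) auto
  next
    case (Suc a')
    show ?thesis
    proof (cases b)
      case 0 then show ?thesis using Suc by auto
    next
      case (Suc b')
      have ne: "transport_plans p a' b' \<noteq> {}" using prod_plan[OF assms] by blast
      show ?thesis unfolding Suc \<open>a = Suc a'\<close> dd.simps
      proof (rule cInf_greatest)
        show "(\<lambda>z. \<Sum>i\<le>a'. \<Sum>j\<le>b'. z i j * dd p i j) ` transport_plans p a' b' \<noteq> {}" using ne by auto
      next
        fix x assume "x \<in> (\<lambda>z. \<Sum>i\<le>a'. \<Sum>j\<le>b'. z i j * dd p i j) ` transport_plans p a' b'"
        then obtain z where z: "z \<in> transport_plans p a' b'" and x: "x = (\<Sum>i\<le>a'. \<Sum>j\<le>b'. z i j * dd p i j)" by auto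
        have "0 \<le> z i j * dd p i j" if "i \<le> a'" "j \<le> b'" for i j
          using less[of i j] that Suc \<open>a = Suc a'\<close> plan_nonneg[OF z] by auto
        then show "0 \<le> x" unfolding x by (auto intro!: sum_nonneg)
      qed
    qed
  qed
qed

lemma bdd_cost: assumes "prob_seq p"
  shows "bdd_below ((\<lambda>z. \<Sum>i\<le>a'. \<Sum>j\<le>b'. z i j * dd p i j) ` transport_plans p a' b')"
proof (rule bdd_belowI[of _ 0])
  fix x assume "x \<in> (\<lambda>z. \<Sum>i\<le>a'. \<Sum>j\<le>b'. z i j * dd p i j) ` transport_plans p a' b'"
  then obtain z where z: "z \<in> transport_plans p a' b'" and x: "x = (\<Sum>i\<le>a'. \<Sum>j\<le>b'. z i j * dd p i j)" by blast
  show "0 \<le> x" unfolding x using plan_nonneg[OF z] dd_nonneg[OF assms]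
    by (intro sum_nonneg mult_nonneg_nonneg) auto
qed

lemma dd_Suc_le: assumes "prob_seq p" "z \<in> transport_plans p a b"
  shows "dd p (Suc a) (Suc b) \<le> (\<Sum>i\<le>a. \<Sum>j\<le>b. z i j * dd p i j)"
proof -
  have "(\<Sum>i\<le>a. \<Sum>j\<le>b. z i j * dd p i j) \<in> (\<lambda>z. \<Sum>i\<le>a. \<Sum>j\<le>b. z i j * dd p i j) ` transport_plans p a b"
    using assms(2) by blast
  then show ?thesis unfolding dd.simps by (rule cInf_lower[OF _ bdd_cost[OF assms(1)]])
qed

lemma dd_Suc_ge: assumes "prob_seq p" "\<And>z. z \<in> transport_plans p a b \<Longrightarrow> x \<le> (\<Sum>i\<le>a. \<Sum>j\<le>b. z i j * dd p i j)"
  shows "x \<le> dd p (Suc a) (Suc b)"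
  unfolding dd.simps by (rule cInf_greatest) (use assms prod_plan[OF assms(1)] in auto)

lemma dd_le1: assumes "prob_seq p" shows "dd p a b \<le> 1"
proof (induction "a + b" arbitrary: a b rule: less_induct)
  case less
  show ?case
  proof (cases a)
    case 0 then show ?thesis by (cases b) auto
  next
    case (Suc a')
    show ?thesis
    proof (cases b)
      case 0 then show ?thesis using Suc by auto
    next
      case (Suc b')
      let ?z = "\<lambda>i j. p a' i * p b' j"
      have "dd p a b \<le> (\<Sum>i\<le>a'. \<Sum>j\<le>b'. ?z i j * dd p i j)"
        unfolding Suc \<open>a = Suc a'\<close> by (rule dd_Suc_le[OF assms prod_plan[OF assms]])
      also have "\<dots> \<le> (\<Sum>i\<le>a'. \<Sum>j\<le>b'. ?z i j)"
        apply (intro sum_mono)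
        subgoal for i j
          using less[of i j] Suc \<open>a = Suc a'\<close> ps_nonneg[OF assms]
          by (simp add: mult_left_le)
        done
      also have "\<dots> = 1" by (rule plan_total[OF assms prod_plan[OF assms]])
      finally show ?thesis .
    qed
  qed
qed


lemma dd_diag: assumes "prob_seq p" shows "dd p a a = 0"
proof (induction a rule: less_induct)
  case (less a)
  show ?case
  proof (cases a)
    case 0 then show ?thesis by simp
  next
    case (Suc a')
    let ?z = "\<lambda>i j. if i = j then p a' i else 0"
    have zP: "?z \<in> transport_plans p a' a'"
      using ps_nonneg[OF assms] ps_out[OF assms] by (auto simp: transport_plans_def)
    have "dd p (Suc a') (Suc a') \<le> (\<Sum>i\<le>a'. \<Sum>j\<le>a'. ?z i j * dd p i j)"
      by (rule dd_Suc_le[OF assms zP])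
    also have "\<dots> = (\<Sum>i\<le>a'. p a' i * dd p i i)"
      by (rule sum.cong[OF refl]) (simp add: if_distrib[of "\<lambda>x. x * _"] cong: if_cong)
    also have "\<dots> = 0" using less Suc by simp
    finally show ?thesis using dd_nonneg[OF assms, of a a] Suc by simp
  qed
qed

lemma transpose_plan: "z \<in> transport_plans p b a \<Longrightarrow> (\<lambda>i j. z j i) \<in> transport_plans p a b"
  by (auto simp: transport_plans_def)

lemma dd_sym_step: assumes "prob_seq p" "\<And>i j. i \<le> a \<Longrightarrow> j \<le> b \<Longrightarrow> dd p i j = dd p j i"
  shows "dd p (Suc a) (Suc b) \<le> dd p (Suc b) (Suc a)"
proof (rule dd_Suc_ge[OF assms(1)])
  fix z assume z: "z \<in> transport_plans p b a"
  have "dd p (Suc a) (Suc b) \<le> (\<Sum>i\<le>a. \<Sum>j\<le>b. z j i * dd p i j)"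
    by (rule dd_Suc_le[OF assms(1) transpose_plan[OF z]])
  also have "\<dots> = (\<Sum>i\<le>a. \<Sum>j\<le>b. z j i * dd p j i)"
    using assms(2) by (intro sum.cong refl) auto
  also have "\<dots> = (\<Sum>j\<le>b. \<Sum>i\<le>a. z j i * dd p j i)"
    by (rule sum.swap)
  finally show "dd p (Suc a) (Suc b) \<le> (\<Sum>i\<le>b. \<Sum>j\<le>a. z i j * dd p i j)" .
qed

lemma dd_sym: assumes "prob_seq p" shows "dd p a b = dd p b a"
proof (induction "a + b" arbitrary: a b rule: less_induct)
  case less
  show ?case
  proof (cases a)
    case 0 then show ?thesis by (cases b) auto
  next
    case (Suc a')
    show ?thesis
    proof (cases b)
      case 0 then show ?thesis using Suc by auto
    next
      case (Suc b')
      have "dd p (Suc a') (Suc b') \<le> dd p (Suc b') (Suc a')"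
        by (rule dd_sym_step[OF assms]) (use less Suc \<open>a = Suc a'\<close> in auto)
      moreover have "dd p (Suc b') (Suc a') \<le> dd p (Suc a') (Suc b')"
        by (rule dd_sym_step[OF assms]) (use less Suc \<open>a = Suc a'\<close> in auto)
      ultimately show ?thesis using Suc \<open>a = Suc a'\<close> by simp
    qed
  qed
qed

lemma sum3_swap: "(\<Sum>i\<in>A. \<Sum>l\<in>B. \<Sum>j\<in>C. X i j l) = (\<Sum>j\<in>C. \<Sum>l\<in>B. \<Sum>i\<in>A. X i j l)"
proof -
  have "(\<Sum>i\<in>A. \<Sum>l\<in>B. \<Sum>j\<in>C. X i j l) = (\<Sum>i\<in>A. \<Sum>j\<in>C. \<Sum>l\<in>B. X i j l)"
    by (rule sum.cong[OF refl], rule sum.swap)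
  also have "\<dots> = (\<Sum>j\<in>C. \<Sum>i\<in>A. \<Sum>l\<in>B. X i j l)" by (rule sum.swap)
  also have "\<dots> = (\<Sum>j\<in>C. \<Sum>l\<in>B. \<Sum>i\<in>A. X i j l)"
    by (rule sum.cong[OF refl], rule sum.swap)
  finally show ?thesis .
qed

lemma glue:
  assumes ps: "prob_seq p" and z1: "z1 \<in> transport_plans p a c" and z2: "z2 \<in> transport_plans p c b"
    and tri: "\<And>i j l. i \<le> a \<Longrightarrow> j \<le> c \<Longrightarrow> l \<le> b \<Longrightarrow> f i l \<le> f i j + f j l"
  shows "\<exists>g \<in> transport_plans p a b. (\<Sum>i\<le>a. \<Sum>l\<le>b. g i l * f i l) \<le>
           (\<Sum>i\<le>a. \<Sum>j\<le>c. z1 i j * f i j) + (\<Sum>j\<le>c. \<Sum>l\<le>b. z2 j l * f j l)"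
proof -
  define w where "w i j l = (if p c j = 0 then 0 else z1 i j * z2 j l / p c j)" for i j l
  define g where "g i l = (\<Sum>j\<le>c. w i j l)" for i l
  have w0: "0 \<le> w i j l" for i j l
    unfolding w_def using plan_nonneg[OF z1] plan_nonneg[OF z2] ps_nonneg[OF ps] by auto
  have W1: "(\<Sum>l\<le>b. w i j l) = z1 i j" if "j \<le> c" for i j
  proof (cases "p c j = 0")
    case True
    then have "z1 i j = 0" using plan_le_col[OF ps z1, of i j] plan_nonneg[OF z1, of i j] by simp
    then show ?thesis using True by (simp add: w_def)
  next
    case False
    have "(\<Sum>l\<le>b. w i j l) = z1 i j * (\<Sum>l\<le>b. z2 j l) / p c j"
      using False by (simp add: w_def sum_divide_distrib[symmetric] sum_distrib_left[symmetric])
    also have "\<dots> = z1 i j" using False plan_row[OF z2 that] by simp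
    finally show ?thesis .
  qed
  have W2: "(\<Sum>i\<le>a. w i j l) = z2 j l" if "j \<le> c" for j l
  proof (cases "p c j = 0")
    case True
    then have "z2 j l = 0" using plan_le_row[OF ps z2, of j l] plan_nonneg[OF z2, of j l] by simp
    then show ?thesis using True by (simp add: w_def)
  next
    case False
    have "(\<Sum>i\<le>a. w i j l) = (\<Sum>i\<le>a. z1 i j) * z2 j l / p c j"
      using False by (simp add: w_def sum_divide_distrib[symmetric] sum_distrib_right[symmetric])
    also have "\<dots> = z2 j l" using False plan_col[OF z1 that] by simp
    finally show ?thesis .
  qed
  have gP: "g \<in> transport_plans p a b"
    unfolding transport_plans_def
  proof (intro CollectI conjI allI impI)
    fix i l show "0 \<le> g i l" unfolding g_def by (intro sum_nonneg) (use w0 in auto)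
  next
    fix i l assume "a < i \<or> b < l"
    then show "g i l = 0"
      unfolding g_def w_def using plan_out[OF z1, of i] plan_out[OF z2, of _ l] by (auto intro!: sum.neutral)
  next
    fix i assume "i \<le> a"
    have "(\<Sum>l\<le>b. g i l) = (\<Sum>j\<le>c. \<Sum>l\<le>b. w i j l)" unfolding g_def by (rule sum.swap)
    also have "\<dots> = (\<Sum>j\<le>c. z1 i j)" using W1 by simp
    also have "\<dots> = p a i" using plan_row[OF z1 \<open>i \<le> a\<close>] .
    finally show "(\<Sum>l\<le>b. g i l) = p a i" .
  next
    fix l assume "l \<le> b"
    have "(\<Sum>i\<le>a. g i l) = (\<Sum>j\<le>c. \<Sum>i\<le>a. w i j l)" unfolding g_def by (rule sum.swap)
    also have "\<dots> = (\<Sum>j\<le>c. z2 j l)" using W2 by simp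
    also have "\<dots> = p b l" using plan_col[OF z2 \<open>l \<le> b\<close>] .
    finally show "(\<Sum>i\<le>a. g i l) = p b l" .
  qed
  have "(\<Sum>i\<le>a. \<Sum>l\<le>b. g i l * f i l) = (\<Sum>i\<le>a. \<Sum>l\<le>b. \<Sum>j\<le>c. w i j l * f i l)"
    unfolding g_def by (simp add: sum_distrib_right)
  also have "\<dots> \<le> (\<Sum>i\<le>a. \<Sum>l\<le>b. \<Sum>j\<le>c. w i j l * f i j + w i j l * f j l)"
    apply (intro sum_mono)
    subgoal for i l j
      using tri[of i j l] w0[of i j l] by (simp add: distrib_left[symmetric] mult_left_mono)
    done
  also have "\<dots> = (\<Sum>i\<le>a. \<Sum>l\<le>b. \<Sum>j\<le>c. w i j l * f i j) + (\<Sum>i\<le>a. \<Sum>l\<le>b. \<Sum>j\<le>c. w i j l * f j l)"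
    by (simp add: sum.distrib)
  also have "(\<Sum>i\<le>a. \<Sum>l\<le>b. \<Sum>j\<le>c. w i j l * f i j) = (\<Sum>i\<le>a. \<Sum>j\<le>c. z1 i j * f i j)"
  proof -
    have "(\<Sum>i\<le>a. \<Sum>l\<le>b. \<Sum>j\<le>c. w i j l * f i j) = (\<Sum>i\<le>a. \<Sum>j\<le>c. \<Sum>l\<le>b. w i j l * f i j)"
      by (rule sum.cong[OF refl], rule sum.swap)
    also have "\<dots> = (\<Sum>i\<le>a. \<Sum>j\<le>c. (\<Sum>l\<le>b. w i j l) * f i j)"
      by (simp add: sum_distrib_right)
    also have "\<dots> = (\<Sum>i\<le>a. \<Sum>j\<le>c. z1 i j * f i j)" using W1 by simp
    finally show ?thesis .
  qed
  also have "(\<Sum>i\<le>a. \<Sum>l\<le>b. \<Sum>j\<le>c. w i j l * f j l) = (\<Sum>j\<le>c. \<Sum>l\<le>b. z2 j l * f j l)"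
  proof -
    have "(\<Sum>i\<le>a. \<Sum>l\<le>b. \<Sum>j\<le>c. w i j l * f j l) = (\<Sum>j\<le>c. \<Sum>l\<le>b. \<Sum>i\<le>a. w i j l * f j l)"
      by (rule sum3_swap)
    also have "\<dots> = (\<Sum>j\<le>c. \<Sum>l\<le>b. (\<Sum>i\<le>a. w i j l) * f j l)"
      by (simp add: sum_distrib_right)
    also have "\<dots> = (\<Sum>j\<le>c. \<Sum>l\<le>b. z2 j l * f j l)" using W2 by simp
    finally show ?thesis .
  qed
  finally show ?thesis using gP by blast
qed

lemma dd_tri: assumes "prob_seq p" shows "dd p x y \<le> dd p x w + dd p w y"
proof (induction "x + y + w" arbitrary: x y w rule: less_induct)
  case less
  note facts = dd_nonneg[OF assms, of x y] dd_nonneg[OF assms, of x w] dd_nonneg[OF assms, of w y]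
    dd_le1[OF assms, of x y]
  show ?case
  proof (cases "x = 0 \<or> y = 0 \<or> w = 0")
    case True
    then show ?thesis using facts
      by (cases x; cases y; cases w) auto
  next
    case False
    then obtain a b c where abc: "x = Suc a" "y = Suc b" "w = Suc c"
      by (metis not0_implies_Suc)
    have H: "dd p (Suc a) (Suc b) \<le> (\<Sum>i\<le>a. \<Sum>j\<le>c. z1 i j * dd p i j) + (\<Sum>j\<le>c. \<Sum>l\<le>b. z2 j l * dd p j l)"
      if z1: "z1 \<in> transport_plans p a c" and z2: "z2 \<in> transport_plans p c b" for z1 z2
    proof -
      obtain g where g: "g \<in> transport_plans p a b"
        and gc: "(\<Sum>i\<le>a. \<Sum>l\<le>b. g i l * dd p i l) \<le>
           (\<Sum>i\<le>a. \<Sum>j\<le>c. z1 i j * dd p i j) + (\<Sum>j\<le>c. \<Sum>l\<le>b. z2 j l * dd p j l)"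
        using glue[OF assms z1 z2, of "dd p"] less abc by force
      show ?thesis using dd_Suc_le[OF assms g] gc by simp
    qed
    have "dd p (Suc a) (Suc b) - dd p (Suc c) (Suc b) \<le> dd p (Suc a) (Suc c)"
    proof (rule dd_Suc_ge[OF assms])
      fix z1 assume z1: "z1 \<in> transport_plans p a c"
      have "dd p (Suc a) (Suc b) - (\<Sum>i\<le>a. \<Sum>j\<le>c. z1 i j * dd p i j) \<le> dd p (Suc c) (Suc b)"
        by (rule dd_Suc_ge[OF assms]) (use H[OF z1] in force)
      then show "dd p (Suc a) (Suc b) - dd p (Suc c) (Suc b) \<le> (\<Sum>i\<le>a. \<Sum>j\<le>c. z1 i j * dd p i j)"
        by simp
    qed
    then show ?thesis using abc by simp
  qed
qed

definition cst :: "(nat \<Rightarrow> nat \<Rightarrow> real) \<Rightarrow> nat \<Rightarrow> nat \<Rightarrow> (nat \<Rightarrow> nat \<Rightarrow> real) \<Rightarrow> real" where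
  "cst f m n z = (\<Sum>i\<le>m. \<Sum>j\<le>n. z i j * f i j)"

definition ind :: "nat \<Rightarrow> nat \<Rightarrow> nat \<Rightarrow> nat \<Rightarrow> real" where
  "ind a e x y = (if x = a \<and> y = e then 1 else 0)"

definition swp :: "(nat \<Rightarrow> nat \<Rightarrow> real) \<Rightarrow> nat \<Rightarrow> nat \<Rightarrow> nat \<Rightarrow> nat \<Rightarrow> real \<Rightarrow> nat \<Rightarrow> nat \<Rightarrow> real" where
  "swp z a b c e t = (\<lambda>x y. z x y + t * (ind a e x y + ind c b x y - ind a b x y - ind c e x y))"

lemma ind_row: "e \<le> n \<Longrightarrow> (\<Sum>y\<le>n. ind a e x y) = (if x = a then 1 else 0)"
  by (cases "x = a") (auto simp: ind_def)

lemma ind_col: "a \<le> m \<Longrightarrow> (\<Sum>x\<le>m. ind a e x y) = (if y = e then 1 else 0)"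
  by (cases "y = e") (auto simp: ind_def)

lemma ind_f: assumes "a \<le> m" "e \<le> n" shows "(\<Sum>x\<le>m. \<Sum>y\<le>n. ind a e x y * f x y) = f a e"
proof -
  have "(\<Sum>y\<le>n. ind a e x y * f x y) = (if x = a then f a e else 0)" for x
    using assms by (cases "x = a") (auto simp: ind_def if_distrib[of "\<lambda>u. u * _"] cong: if_cong)
  then show ?thesis using assms by simp
qed

lemma swp_plan:
  assumes z: "z \<in> transport_plans p m n" and le: "a \<le> m" "c \<le> m" "b \<le> n" "e \<le> n"
    and ne: "a \<noteq> c" "b \<noteq> e" and t: "0 \<le> t" "t \<le> z a b" "t \<le> z c e"
  shows "swp z a b c e t \<in> transport_plans p m n"
  unfolding transport_plans_def
proof (intro CollectI conjI allI impI)
  fix x y show "0 \<le> swp z a b c e t x y"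
    using plan_nonneg[OF z, of x y] ne t by (auto simp: swp_def ind_def)
next
  fix x y assume "m < x \<or> n < y"
  then show "swp z a b c e t x y = 0"
    using plan_out[OF z] le by (auto simp: swp_def ind_def)
next
  fix x assume x: "x \<le> m"
  have "(\<Sum>y\<le>n. swp z a b c e t x y) = (\<Sum>y\<le>n. z x y) + t * ((\<Sum>y\<le>n. ind a e x y) + (\<Sum>y\<le>n. ind c b x y)
     - (\<Sum>y\<le>n. ind a b x y) - (\<Sum>y\<le>n. ind c e x y))"
    by (simp add: swp_def sum.distrib sum_subtractf sum_distrib_left[symmetric])
  also have "\<dots> = (\<Sum>y\<le>n. z x y)" using le by (simp add: ind_row)
  finally show "(\<Sum>y\<le>n. swp z a b c e t x y) = p m x" using plan_row[OF z x] by simp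
next
  fix y assume y: "y \<le> n"
  have "(\<Sum>x\<le>m. swp z a b c e t x y) = (\<Sum>x\<le>m. z x y) + t * ((\<Sum>x\<le>m. ind a e x y) + (\<Sum>x\<le>m. ind c b x y)
     - (\<Sum>x\<le>m. ind a b x y) - (\<Sum>x\<le>m. ind c e x y))"
    by (simp add: swp_def sum.distrib sum_subtractf sum_distrib_left[symmetric])
  also have "\<dots> = (\<Sum>x\<le>m. z x y)" using le by (simp add: ind_col)
  finally show "(\<Sum>x\<le>m. swp z a b c e t x y) = p n y" using plan_col[OF z y] by simp
qed

lemma swp_cost:
  assumes le: "a \<le> m" "c \<le> m" "b \<le> n" "e \<le> n"
  shows "cst f m n (swp z a b c e t) = cst f m n z + t * (f a e + f c b - f a b - f c e)"
proof -
  have eq: "swp z a b c e t x y * f x y = z x y * f x y + t * (ind a e x y * f x y + ind c b x y * f x y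
      - ind a b x y * f x y - ind c e x y * f x y)" for x y
    by (simp add: swp_def algebra_simps)
  have "cst f m n (swp z a b c e t) = cst f m n z + t * ((\<Sum>x\<le>m. \<Sum>y\<le>n. ind a e x y * f x y)
     + (\<Sum>x\<le>m. \<Sum>y\<le>n. ind c b x y * f x y) - (\<Sum>x\<le>m. \<Sum>y\<le>n. ind a b x y * f x y)
     - (\<Sum>x\<le>m. \<Sum>y\<le>n. ind c e x y * f x y))"
    unfolding cst_def eq by (simp add: sum.distrib sum_subtractf sum_distrib_left[symmetric])
  then show ?thesis using le by (simp add: ind_f)
qed

lemma compact_fun: assumes "\<And>i. compact (S i)" shows "compact (Pi\<^sub>E UNIV (S :: 'a \<Rightarrow> 'b::topological_space set))"
proof -
  have "compactin (product_topology (\<lambda>i::'a. euclidean :: 'b topology) UNIV) (Pi\<^sub>E UNIV S)"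
    by (subst compactin_PiE) (simp add: assms)
  then show ?thesis by (simp only: euclidean_product_topology compactin_euclidean_iff)
qed

lemma coord_cont [continuous_intros]: "continuous_on S (\<lambda>z::nat \<Rightarrow> nat \<Rightarrow> real. z i j)"
  by (rule continuous_on_subset[OF continuous_on_product_then_coordinatewise[OF continuous_on_product_coordinates]]) simp

lemma cst_cont: "continuous_on S (cst f m n)"
  unfolding cst_def by (intro continuous_intros)

lemma closed_imp_const: "closed {z. Q z} \<Longrightarrow> closed {z. C \<longrightarrow> Q z}"
  by (cases C) auto

lemma plans_compact: assumes ps: "prob_seq p" shows "compact (transport_plans p m n)"
proof -
  define B where "B = Pi\<^sub>E UNIV (\<lambda>i::nat. Pi\<^sub>E UNIV (\<lambda>j::nat. {0..1::real}))"
  have cB: "compact B" unfolding B_def by (intro compact_fun compact_Icc)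
  have sub: "transport_plans p m n \<subseteq> B"
  proof
    fix z assume z: "z \<in> transport_plans p m n"
    have "z i j \<in> {0..1}" for i j
      using plan_nonneg[OF z, of i j] plan_le_row[OF ps z, of i j] ps_le1[OF ps, of m i] by auto
    then show "z \<in> B" unfolding B_def by (auto simp: PiE_UNIV_domain)
  qed
  have eq: "transport_plans p m n =
     {z. \<forall>i j. 0 \<le> z i j} \<inter> {z. \<forall>i j. (m < i \<or> n < j) \<longrightarrow> z i j = 0} \<inter>
     {z. \<forall>i. i \<le> m \<longrightarrow> (\<Sum>j\<le>n. z i j) = p m i} \<inter> {z. \<forall>j. j \<le> n \<longrightarrow> (\<Sum>i\<le>m. z i j) = p n j}"
    unfolding transport_plans_def by blast
  have cl: "closed (transport_plans p m n)"
    unfolding eq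
    by (intro closed_Int closed_Collect_all closed_imp_const closed_Collect_le closed_Collect_eq
          continuous_intros)
  have "transport_plans p m n = B \<inter> transport_plans p m n" using sub by blast
  then show ?thesis using compact_Int_closed[OF cB cl] by simp
qed

lemma d_dd: "d p (int i - 1) (int j - 1) = dd p i j"
  by (simp add: d_def)

lemma tc_cst: "transport_cost p m n z = cst (dd p) m n z"
  by (simp add: transport_cost_def cst_def d_dd)

lemma sq_bound: assumes "a \<le> n" "b \<le> (n::nat)" shows "(real a - real b)^2 \<le> (real n)^2"
proof -
  have h: "real a \<le> real n" "real b \<le> real n" "0 \<le> real a" "0 \<le> real b" using assms by auto
  have "\<bar>real a - real b\<bar> \<le> \<bar>real n\<bar>" unfolding abs_le_iff using h by linarith
  then show ?thesis using abs_le_square_iff by blast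
qed

lemma exists_pos_rest:
  assumes "finite A" "i \<in> A" "(\<Sum>j\<in>A. f j) > (f i :: real)"
  shows "\<exists>k\<in>A - {i}. f k > 0"
proof (rule ccontr)
  assume "\<not> ?thesis"
  then have "(\<Sum>j\<in>A - {i}. f j) \<le> 0" by (intro sum_nonpos) (force simp: not_less)
  moreover have "(\<Sum>j\<in>A. f j) = f i + (\<Sum>j\<in>A - {i}. f j)" using assms by (simp add: sum.remove)
  ultimately show False using assms by simp
qed

theorem proposition2:
  fixes p :: "nat \<Rightarrow> nat \<Rightarrow> real" and n m :: nat
  assumes "prob_seq p"
    and Q: "\<And>i j k l :: int. -1 \<le> i \<Longrightarrow> i \<le> j \<Longrightarrow> j \<le> k \<Longrightarrow> k \<le> l \<Longrightarrow> l \<le> int n - 1 \<Longrightarrow>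
              d p i l + d p j k \<le> d p i k + d p j l"
    and "m \<le> n"
  shows "\<exists>z. optimal_plan p m n z \<and> simple_plan p m n z \<and> nested_plan z"
proof -
  note ps = assms(1)
  have Q': "dd p a e + dd p b c \<le> dd p a c + dd p b e"
    if "a \<le> b" "b \<le> c" "c \<le> e" "e \<le> n" for a b c e
    using Q[of "int a - 1" "int b - 1" "int c - 1" "int e - 1"] that by (simp add: d_dd)
  let ?P = "transport_plans p m n"
  let ?c = "cst (dd p) m n"
  have cP: "compact ?P" by (rule plans_compact[OF ps])
  have neP: "?P \<noteq> {}" using prod_plan[OF ps] by blast
  obtain z0 where z0: "z0 \<in> ?P" "\<And>z. z \<in> ?P \<Longrightarrow> ?c z0 \<le> ?c z"
    using continuous_attains_inf[OF cP neP cst_cont] by blast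
  define S where "S = ?P \<inter> {z. ?c z \<le> ?c z0}"
  have cS: "compact S" unfolding S_def
    by (intro compact_Int_closed cP closed_Collect_le cst_cont continuous_intros)
  have neS: "S \<noteq> {}" using z0 by (auto simp: S_def)
  define C where "C = 2 * (real n)^2 + 1"
  define W where "W a b = (if a = b then C else 0) + (real a - real b)^2" for a b :: nat
  obtain z where zS: "z \<in> S" and zmax: "\<And>z'. z' \<in> S \<Longrightarrow> cst W m n z' \<le> cst W m n z"
    using continuous_attains_sup[OF cS neS cst_cont] by blast
  have zP: "z \<in> ?P" and zc: "?c z \<le> ?c z0" using zS by (auto simp: S_def)
  have opt: "optimal_plan p m n z"
    unfolding optimal_plan_def tc_cst using zP zc z0 by force
  have simple: "simple_plan p m n z"
    unfolding simple_plan_def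
  proof (intro allI impI)
    fix i assume im: "i \<le> m"
    have in_: "i \<le> n" using im \<open>m \<le> n\<close> by simp
    have u1: "z i i \<le> p m i" by (rule plan_le_row[OF ps zP])
    have u2: "z i i \<le> p n i" by (rule plan_le_col[OF ps zP])
    show "z i i = min (p m i) (p n i)"
    proof (rule ccontr)
      assume "z i i \<noteq> min (p m i) (p n i)"
      then have l1: "z i i < p m i" and l2: "z i i < p n i" using u1 u2 by auto
      obtain k where k: "k \<le> n" "k \<noteq> i" "z i k > 0"
        using exists_pos_rest[of "{..n}" i "\<lambda>j. z i j"] l1 plan_row[OF zP im] in_ by auto
      obtain j where j: "j \<le> m" "j \<noteq> i" "z j i > 0"
        using exists_pos_rest[of "{..m}" i "\<lambda>j. z j i"] l2 plan_col[OF zP in_] im by auto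
      define t where "t = min (z i k) (z j i)"
      have t: "0 < t" "t \<le> z i k" "t \<le> z j i" using k j by (auto simp: t_def)
      define z' where "z' = swp z i k j i t"
      have z'P: "z' \<in> ?P" unfolding z'_def
        by (rule swp_plan[OF zP im j(1) k(1) in_]) (use j k t in auto)
      have "?c z' = ?c z + t * (dd p i i + dd p j k - dd p i k - dd p j i)"
        unfolding z'_def by (rule swp_cost) (use im j k in_ in auto)
      moreover have "dd p j k \<le> dd p j i + dd p i k" by (rule dd_tri[OF ps])
      moreover have "dd p i i = 0" by (rule dd_diag[OF ps])
      ultimately have "?c z' \<le> ?c z" using t by (simp add: mult_le_0_iff)
      then have "z' \<in> S" using z'P zc by (auto simp: S_def)
      then have A: "cst W m n z' \<le> cst W m n z" by (rule zmax)
      have B: "cst W m n z' = cst W m n z + t * (W i i + W j k - W i k - W j i)"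
        unfolding z'_def by (rule swp_cost) (use im j k in_ in auto)
      have "W i k \<le> (real n)^2" using sq_bound[OF in_ k(1)] k(2) by (simp add: W_def)
      moreover have "W j i \<le> (real n)^2" using sq_bound[of j n i] j in_ \<open>m \<le> n\<close> by (simp add: W_def)
      moreover have "0 \<le> W j k" by (simp add: W_def C_def)
      moreover have "W i i = C" by (simp add: W_def)
      ultimately have "W i i + W j k - W i k - W j i > 0" by (simp add: C_def)
      then have "t * (W i i + W j k - W i k - W j i) > 0" using t by simp
      then show False using A B by simp
    qed
  qed
  have nested: "nested_plan z"
    unfolding nested_plan_def
  proof
    assume "\<exists>i j k l. i < j \<and> j < k \<and> k < l \<and> 0 < z i k \<and> 0 < z j l"
    then obtain i j k l where o: "i < j" "j < k" "k < l" and pz: "0 < z i k" "0 < z j l" by blast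
    have ik: "i \<le> m" "k \<le> n" using pz(1) plan_out[OF zP, of i k] by (auto simp: not_less[symmetric])
    have jl: "j \<le> m" "l \<le> n" using pz(2) plan_out[OF zP, of j l] by (auto simp: not_less[symmetric])
    define t where "t = min (z i k) (z j l)"
    have t: "0 < t" "t \<le> z i k" "t \<le> z j l" using pz by (auto simp: t_def)
    define z' where "z' = swp z i k j l t"
    have z'P: "z' \<in> ?P" unfolding z'_def
      by (rule swp_plan[OF zP ik(1) jl(1) ik(2) jl(2)]) (use o t in auto)
    have "?c z' = ?c z + t * (dd p i l + dd p j k - dd p i k - dd p j l)"
      unfolding z'_def by (rule swp_cost) (use ik jl in auto)
    moreover have "dd p i l + dd p j k \<le> dd p i k + dd p j l"
      by (rule Q') (use o jl in auto)
    ultimately have "?c z' \<le> ?c z" using t by (simp add: mult_le_0_iff)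
    then have "z' \<in> S" using z'P zc by (auto simp: S_def)
    then have A: "cst W m n z' \<le> cst W m n z" by (rule zmax)
    have B: "cst W m n z' = cst W m n z + t * (W i l + W j k - W i k - W j l)"
      unfolding z'_def by (rule swp_cost) (use ik jl in auto)
    have "W i l + W j k - W i k - W j l = 2 * (real j - real i) * (real l - real k)"
      using o by (simp add: W_def power2_eq_square algebra_simps)
    also have "\<dots> > 0" using o by simp
    finally have "t * (W i l + W j k - W i k - W j l) > 0" using t by simp
    then show False using A B by simp
  qed
  show ?thesis using opt simple nested by blast
qed

end
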